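(* A policy profile $\pi^*\in\Pi$ is a Nash policy if and only if $\langle v(\pi^* ),\pi-\pi^*\rangle\le0$ for all $\pi\in\Pi$.
   Context: Standing setting. Finite $N$-player stochastic game with random stopping: players $\mathcal N$, finite states $\mathcal S$, finite action sets $\mathcal A_i$, $\mathcal A=\prod_i\mathcal A_i$, rewards $r_i:\mathcal S\times\mathcal A\to[-1,1]$, nonnegative transition weights $P(s'\mid s,a)$ with stopping probability $\zeta_{s,a}=1-\sum_{s'}P(s'\mid s,a)\ge\zeta>0$, initial distribution $\rho$. Policies $\pi_i\in\Pi_i=\Delta(\mathcal A_i)^{\mathcal S}$, $\Pi=\prod_i\Pi_i$. Episodes: $s_0\sim\rho$; players independently draw $a_{i,t}\sim\pi_i(\cdot\mid s_t)$; stop w.p. $\zeta_{s_t,a_t}$ (time $T(\tau)$), else move to $s'$ w.p. $P(s'\mid s_t,a_t)$. $V_{i,\rho}(\pi)=\mathbb E_\pi[\sum_{t=0}^{T(\tau)}r_i(s_t,a_t)]$, $v_i(\pi)=\nabla_{\pi_i}V_{i,\rho}(\pi)$, $v=(v_i)_i$. A Nash policy satisfies $V_{i,\rho}(\pi^* )\ge V_{i,\rho}(\pi_i;\pi^*_{-i})$ for all $i$ and $\pi_i\in\Pi_i$. Standing assumption: the mismatch coefficient $M=\max_{\pi,\pi'}\|\tilde d^\pi_\rho/\tilde d^{\pi'}_\rho\|_\infty$ is finite, where $\tilde d^\pi_\rho(s)=\mathbb E_\pi[\sum_{t=0}^{T(\tau)}\mathbf 1\{s_t=s\}]$. *)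

theory Defs
  imports "HOL-Analysis.Analysis"
begin

(* Players 'n, states 's, action universe 'a (all finite types).
   Player i's action set is A i (a nonempty subset of 'a).
   A policy profile is pol :: 'n \<Rightarrow> 's \<Rightarrow> 'a \<Rightarrow> real,  pol i s a = pi_i(a|s). *)

type_synonym ('n,'s,'a) profile = "'n \<Rightarrow> 's \<Rightarrow> 'a \<Rightarrow> real"

definition joint_actions :: "('n \<Rightarrow> 'a set) \<Rightarrow> ('n \<Rightarrow> 'a) set" where
  "joint_actions A = PiE UNIV A"

definition policy_set_i :: "('n \<Rightarrow> 'a set) \<Rightarrow> 'n \<Rightarrow> ('s \<Rightarrow> 'a \<Rightarrow> real) set" where
  "policy_set_i A i = {p. \<forall>s. (\<forall>a. a \<notin> A i \<longrightarrow> p s a = 0) \<and>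
                              (\<forall>a\<in>A i. 0 \<le> p s a) \<and> (\<Sum>a\<in>A i. p s a) = 1}"

definition policy_set :: "('n \<Rightarrow> 'a set) \<Rightarrow> ('n,'s,'a) profile set" where
  "policy_set A = {pol. \<forall>i. pol i \<in> policy_set_i A i}"

definition joint_prob :: "('n::finite,'s,'a) profile \<Rightarrow> 's \<Rightarrow> ('n \<Rightarrow> 'a) \<Rightarrow> real" where
  "joint_prob pol s a = (\<Prod>i\<in>UNIV. pol i s (a i))"

(* occ t s = Pr(episode not yet stopped at time t and s_t = s) *)
fun occ :: "('n::finite \<Rightarrow> 'a set) \<Rightarrow> ('s::finite \<Rightarrow> ('n \<Rightarrow> 'a) \<Rightarrow> 's \<Rightarrow> real) \<Rightarrow> ('s \<Rightarrow> real)
            \<Rightarrow> ('n,'s,'a) profile \<Rightarrow> nat \<Rightarrow> 's \<Rightarrow> real" where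
  "occ A P \<rho> pol 0 s = \<rho> s"
| "occ A P \<rho> pol (Suc t) s' =
     (\<Sum>s\<in>UNIV. occ A P \<rho> pol t s * (\<Sum>a\<in>joint_actions A. joint_prob pol s a * P s a s'))"

(* V_{i,rho}(pol) = E_pi[ sum_{t=0}^{T} r_i(s_t,a_t) ] *)
definition value_fn :: "('n::finite \<Rightarrow> 'a set) \<Rightarrow> ('s::finite \<Rightarrow> ('n \<Rightarrow> 'a) \<Rightarrow> 's \<Rightarrow> real) \<Rightarrow> ('s \<Rightarrow> real)
            \<Rightarrow> ('n \<Rightarrow> 's \<Rightarrow> ('n \<Rightarrow> 'a) \<Rightarrow> real) \<Rightarrow> 'n \<Rightarrow> ('n,'s,'a) profile \<Rightarrow> real" where
  "value_fn A P \<rho> r i pol =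
     (\<Sum>t. \<Sum>s\<in>UNIV. occ A P \<rho> pol t s * (\<Sum>a\<in>joint_actions A. joint_prob pol s a * r i s a))"

definition visitation :: "('n::finite \<Rightarrow> 'a set) \<Rightarrow> ('s::finite \<Rightarrow> ('n \<Rightarrow> 'a) \<Rightarrow> 's \<Rightarrow> real) \<Rightarrow> ('s \<Rightarrow> real)
            \<Rightarrow> ('n,'s,'a) profile \<Rightarrow> 's \<Rightarrow> real" where
  "visitation A P \<rho> pol s = (\<Sum>t. occ A P \<rho> pol t s)"

definition grad_i :: "('n::finite \<Rightarrow> 'a set) \<Rightarrow> ('s::finite \<Rightarrow> ('n \<Rightarrow> 'a) \<Rightarrow> 's \<Rightarrow> real) \<Rightarrow> ('s \<Rightarrow> real)
            \<Rightarrow> ('n \<Rightarrow> 's \<Rightarrow> ('n \<Rightarrow> 'a) \<Rightarrow> real) \<Rightarrow> ('n,'s,'a) profile \<Rightarrow> 'n \<Rightarrow> 's \<Rightarrow> 'a \<Rightarrow> real" where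
  "grad_i A P \<rho> r pol i s a =
     deriv (\<lambda>x. value_fn A P \<rho> r i (pol(i := (pol i)(s := (pol i s)(a := x))))) (pol i s a)"

definition grad_inner :: "('n::finite \<Rightarrow> 'a set) \<Rightarrow> ('s::finite \<Rightarrow> ('n \<Rightarrow> 'a) \<Rightarrow> 's \<Rightarrow> real) \<Rightarrow> ('s \<Rightarrow> real)
            \<Rightarrow> ('n \<Rightarrow> 's \<Rightarrow> ('n \<Rightarrow> 'a) \<Rightarrow> real) \<Rightarrow> ('n,'s,'a) profile \<Rightarrow> ('n,'s,'a) profile \<Rightarrow> real" where
  "grad_inner A P \<rho> r pis pol =
     (\<Sum>i\<in>UNIV. \<Sum>s\<in>UNIV. \<Sum>a\<in>A i. grad_i A P \<rho> r pis i s a * (pol i s a - pis i s a))"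

definition is_nash :: "('n::finite \<Rightarrow> 'a set) \<Rightarrow> ('s::finite \<Rightarrow> ('n \<Rightarrow> 'a) \<Rightarrow> 's \<Rightarrow> real) \<Rightarrow> ('s \<Rightarrow> real)
            \<Rightarrow> ('n \<Rightarrow> 's \<Rightarrow> ('n \<Rightarrow> 'a) \<Rightarrow> real) \<Rightarrow> ('n,'s,'a) profile \<Rightarrow> bool" where
  "is_nash A P \<rho> r pis \<longleftrightarrow> pis \<in> policy_set A \<and>
     (\<forall>i. \<forall>p\<in>policy_set_i A i. value_fn A P \<rho> r i (pis(i := p)) \<le> value_fn A P \<rho> r i pis)"

end

theory Submission
  imports Defs "HOL-Analysis.Analysis"
begin


definition contr :: "('s::finite \<Rightarrow> 's \<Rightarrow> real) \<Rightarrow> real \<Rightarrow> bool" where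
  "contr K c \<longleftrightarrow> 0 \<le> c \<and> c < 1 \<and> (\<forall>s. (\<Sum>s'\<in>UNIV. \<bar>K s s'\<bar>) \<le> c)"

fun occK :: "('s::finite \<Rightarrow> 's \<Rightarrow> real) \<Rightarrow> ('s \<Rightarrow> real) \<Rightarrow> nat \<Rightarrow> 's \<Rightarrow> real" where
  "occK K \<rho> 0 s = \<rho> s"
| "occK K \<rho> (Suc t) s' = (\<Sum>s\<in>UNIV. occK K \<rho> t s * K s s')"

definition visK :: "('s::finite \<Rightarrow> 's \<Rightarrow> real) \<Rightarrow> ('s \<Rightarrow> real) \<Rightarrow> 's \<Rightarrow> real" where
  "visK K \<rho> s = (\<Sum>t. occK K \<rho> t s)"

definition valK :: "('s::finite \<Rightarrow> 's \<Rightarrow> real) \<Rightarrow> ('s \<Rightarrow> real) \<Rightarrow> ('s \<Rightarrow> real) \<Rightarrow> real" where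
  "valK K \<rho> R = (\<Sum>t. \<Sum>s\<in>UNIV. occK K \<rho> t s * R s)"

fun colK :: "('s::finite \<Rightarrow> 's \<Rightarrow> real) \<Rightarrow> ('s \<Rightarrow> real) \<Rightarrow> nat \<Rightarrow> 's \<Rightarrow> real" where
  "colK K R 0 s = R s"
| "colK K R (Suc t) s = (\<Sum>s'\<in>UNIV. K s s' * colK K R t s')"

definition WK :: "('s::finite \<Rightarrow> 's \<Rightarrow> real) \<Rightarrow> ('s \<Rightarrow> real) \<Rightarrow> 's \<Rightarrow> real" where
  "WK K R s = (\<Sum>t. colK K R t s)"

lemma l1_step_gen:
  fixes K :: "'s::finite \<Rightarrow> 's \<Rightarrow> real"
  assumes "\<And>s. (\<Sum>s'\<in>UNIV. \<bar>K s s'\<bar>) \<le> c"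
  shows "(\<Sum>s'\<in>UNIV. \<bar>\<Sum>s\<in>UNIV. e s * K s s'\<bar>) \<le> c * (\<Sum>s\<in>UNIV. \<bar>e s\<bar>)"
proof -
  have "(\<Sum>s'\<in>UNIV. \<bar>\<Sum>s\<in>UNIV. e s * K s s'\<bar>) \<le> (\<Sum>s'\<in>UNIV. \<Sum>s\<in>UNIV. \<bar>e s\<bar> * \<bar>K s s'\<bar>)"
    by (intro sum_mono) (metis (no_types, lifting) abs_mult sum.cong sum_abs)
  also have "\<dots> = (\<Sum>s\<in>UNIV. \<bar>e s\<bar> * (\<Sum>s'\<in>UNIV. \<bar>K s s'\<bar>))"
    by (subst sum.swap) (simp add: sum_distrib_left)
  also have "\<dots> \<le> (\<Sum>s\<in>UNIV. \<bar>e s\<bar> * c)"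
    using assms by (intro sum_mono mult_left_mono) auto
  also have "\<dots> = c * (\<Sum>s\<in>UNIV. \<bar>e s\<bar>)" by (simp add: sum_distrib_left mult.commute)
  finally show ?thesis .
qed

lemma l1_step:
  assumes "contr K c"
  shows "(\<Sum>s'\<in>UNIV. \<bar>\<Sum>s\<in>UNIV. e s * K s s'\<bar>) \<le> c * (\<Sum>s\<in>UNIV. \<bar>e s\<bar>)"
  using assms by (intro l1_step_gen) (auto simp: contr_def)

lemma occK_l1:
  assumes "contr K c"
  shows "(\<Sum>s\<in>UNIV. \<bar>occK K \<rho> t s\<bar>) \<le> c^t * (\<Sum>s\<in>UNIV. \<bar>\<rho> s\<bar>)"
proof (induction t)
  case 0 show ?case by simp
next
  case (Suc t)
  have c: "0 \<le> c" using assms by (simp add: contr_def)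
  have "(\<Sum>s\<in>UNIV. \<bar>occK K \<rho> (Suc t) s\<bar>) \<le> c * (\<Sum>s\<in>UNIV. \<bar>occK K \<rho> t s\<bar>)"
    using l1_step[OF assms, of "occK K \<rho> t"] by simp
  also have "\<dots> \<le> c * (c^t * (\<Sum>s\<in>UNIV. \<bar>\<rho> s\<bar>))" using Suc.IH c by (rule mult_left_mono)
  finally show ?case by (simp add: mult.assoc)
qed

lemma occK_abs:
  assumes "contr K c"
  shows "\<bar>occK K \<rho> t s\<bar> \<le> c^t * (\<Sum>s\<in>UNIV. \<bar>\<rho> s\<bar>)"
  using member_le_sum[of s UNIV "\<lambda>s. \<bar>occK K \<rho> t s\<bar>"] occK_l1[OF assms, of \<rho> t] by simp

lemma geom_summable:
  assumes "contr K c" shows "summable (\<lambda>t. c^t * B)"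
  using assms by (intro summable_mult2 summable_geometric) (auto simp: contr_def)

lemma summable_occK:
  assumes "contr K c" shows "summable (\<lambda>t. occK K \<rho> t s)"
  by (rule summable_comparison_test[OF _ geom_summable[OF assms]])
     (use occK_abs[OF assms] in auto)

lemma summable_occK_R:
  assumes "contr K c" shows "summable (\<lambda>t. occK K \<rho> t s * R s)"
  by (intro summable_mult2 summable_occK[OF assms])

lemma visK_fix:
  assumes "contr K c"
  shows "visK K \<rho> s' = \<rho> s' + (\<Sum>s\<in>UNIV. visK K \<rho> s * K s s')"
proof -
  have "(\<Sum>t. occK K \<rho> (Suc t) s') = visK K \<rho> s' - \<rho> s'"
    using suminf_split_head[OF summable_occK[OF assms, of \<rho> s']] by (simp add: visK_def)
  moreover have "(\<Sum>t. occK K \<rho> (Suc t) s') = (\<Sum>s\<in>UNIV. visK K \<rho> s * K s s')"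
    by (simp add: visK_def suminf_sum summable_mult2[OF summable_occK[OF assms]] suminf_mult2[OF summable_occK[OF assms]])
  ultimately show ?thesis by simp
qed

lemma valK_vis:
  assumes "contr K c"
  shows "valK K \<rho> R = (\<Sum>s\<in>UNIV. visK K \<rho> s * R s)"
  by (simp add: valK_def visK_def suminf_sum summable_occK_R[OF assms] suminf_mult2[OF summable_occK[OF assms]])

lemma sum_swap_mid:
  fixes v :: "'s::finite \<Rightarrow> real"
  shows "(\<Sum>s\<in>UNIV. v s * (\<Sum>s'\<in>UNIV. K s s' * W s')) = (\<Sum>s'\<in>UNIV. (\<Sum>s\<in>UNIV. v s * K s s') * W s')"
proof -
  have "(\<Sum>s\<in>UNIV. v s * (\<Sum>s'\<in>UNIV. K s s' * W s')) = (\<Sum>s\<in>UNIV. \<Sum>s'\<in>UNIV. v s * K s s' * W s')"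
    by (simp add: sum_distrib_left mult.assoc)
  also have "\<dots> = (\<Sum>s'\<in>UNIV. \<Sum>s\<in>UNIV. v s * K s s' * W s')" by (rule sum.swap)
  also have "\<dots> = (\<Sum>s'\<in>UNIV. (\<Sum>s\<in>UNIV. v s * K s s') * W s')" by (simp add: sum_distrib_right)
  finally show ?thesis .
qed

lemma perf_diff:
  assumes "contr K c"
  shows "(\<Sum>s\<in>UNIV. visK K \<rho> s * (R s + (\<Sum>s'\<in>UNIV. K s s' * W s') - W s))
         = valK K \<rho> R - (\<Sum>s\<in>UNIV. \<rho> s * W s)"
proof -
  let ?v = "visK K \<rho>"
  have mid: "(\<Sum>s\<in>UNIV. ?v s * (\<Sum>s'\<in>UNIV. K s s' * W s'))
        = (\<Sum>s'\<in>UNIV. (?v s' - \<rho> s') * W s')"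
    unfolding sum_swap_mid using visK_fix[OF assms]
    by (intro sum.cong refl) (metis add_diff_cancel_left')
  have "(\<Sum>s\<in>UNIV. ?v s * (R s + (\<Sum>s'\<in>UNIV. K s s' * W s') - W s))
      = (\<Sum>s\<in>UNIV. ?v s * R s) + (\<Sum>s\<in>UNIV. ?v s * (\<Sum>s'\<in>UNIV. K s s' * W s')) - (\<Sum>s\<in>UNIV. ?v s * W s)"
    by (simp add: distrib_left right_diff_distrib sum.distrib sum_subtractf)
  also have "\<dots> = (\<Sum>s\<in>UNIV. ?v s * R s) - (\<Sum>s\<in>UNIV. \<rho> s * W s)"
    unfolding mid by (simp add: left_diff_distrib sum_subtractf)
  finally show ?thesis by (simp add: valK_vis[OF assms])
qed

lemma fix_bound:
  assumes "contr K c" and "\<And>s'. e s' = g s' + (\<Sum>s\<in>UNIV. e s * K s s')"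
  shows "(1 - c) * (\<Sum>s\<in>UNIV. \<bar>e s\<bar>) \<le> (\<Sum>s\<in>UNIV. \<bar>g s\<bar>)"
proof -
  have "(\<Sum>s\<in>UNIV. \<bar>e s\<bar>) \<le> (\<Sum>s'\<in>UNIV. \<bar>g s'\<bar> + \<bar>\<Sum>s\<in>UNIV. e s * K s s'\<bar>)"
    by (intro sum_mono) (subst assms(2), rule abs_triangle_ineq)
  also have "\<dots> \<le> (\<Sum>s\<in>UNIV. \<bar>g s\<bar>) + c * (\<Sum>s\<in>UNIV. \<bar>e s\<bar>)"
    using l1_step[OF assms(1), of e] by (simp add: sum.distrib)
  finally show ?thesis by (simp add: algebra_simps)
qed

lemma col_step:
  assumes "contr K c" "\<And>s. \<bar>v s\<bar> \<le> B"
  shows "\<bar>\<Sum>s'\<in>UNIV. K s s' * v s'\<bar> \<le> c * B"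
proof -
  have B0: "0 \<le> B" using assms(2)[of s] by linarith
  have "\<bar>\<Sum>s'\<in>UNIV. K s s' * v s'\<bar> \<le> (\<Sum>s'\<in>UNIV. \<bar>K s s' * v s'\<bar>)" by (rule sum_abs)
  also have "\<dots> \<le> (\<Sum>s'\<in>UNIV. \<bar>K s s'\<bar> * B)"
    by (rule sum_mono) (simp add: abs_mult mult_left_mono assms(2))
  also have "\<dots> = (\<Sum>s'\<in>UNIV. \<bar>K s s'\<bar>) * B" by (simp add: sum_distrib_right)
  also have "\<dots> \<le> c * B"
    using assms(1) B0 unfolding contr_def by (intro mult_right_mono) auto
  finally show ?thesis .
qed

lemma colK_abs:
  assumes "contr K c"
  shows "\<bar>colK K R t s\<bar> \<le> c^t * (\<Sum>s\<in>UNIV. \<bar>R s\<bar>)"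
proof (induction t arbitrary: s)
  case 0 show ?case using member_le_sum[of s UNIV "\<lambda>s. \<bar>R s\<bar>"] by simp
next
  case (Suc t)
  show ?case using col_step[OF assms, of "colK K R t" "c^t * (\<Sum>s\<in>UNIV. \<bar>R s\<bar>)" s] Suc.IH
    by (simp add: mult.assoc)
qed

lemma summable_colK:
  assumes "contr K c" shows "summable (\<lambda>t. colK K R t s)"
  by (rule summable_comparison_test[OF _ geom_summable[OF assms]])
     (use colK_abs[OF assms] in auto)

lemma WK_fix:
  assumes "contr K c"
  shows "WK K R s = R s + (\<Sum>s'\<in>UNIV. K s s' * WK K R s')"
proof -
  have "(\<Sum>t. colK K R (Suc t) s) = WK K R s - R s"
    using suminf_split_head[OF summable_colK[OF assms, of R s]] by (simp add: WK_def)
  moreover have "(\<Sum>t. colK K R (Suc t) s) = (\<Sum>s'\<in>UNIV. K s s' * WK K R s')"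
  proof -
    have "(\<Sum>t. colK K R (Suc t) s) = (\<Sum>t. \<Sum>s'\<in>UNIV. K s s' * colK K R t s')" by simp
    also have "\<dots> = (\<Sum>s'\<in>UNIV. \<Sum>t. K s s' * colK K R t s')"
      by (rule suminf_sum) (intro summable_mult summable_colK[OF assms])
    also have "\<dots> = (\<Sum>s'\<in>UNIV. K s s' * WK K R s')"
      unfolding WK_def by (intro sum.cong refl suminf_mult summable_colK[OF assms])
    finally show ?thesis .
  qed
  ultimately show ?thesis by simp
qed

lemma valK_W:
  assumes "contr K c"
  shows "valK K \<rho> R = (\<Sum>s\<in>UNIV. \<rho> s * WK K R s)"
proof -
  have "R s + (\<Sum>s'\<in>UNIV. K s s' * WK K R s') - WK K R s = 0" for s
    using WK_fix[OF assms, of R s] by linarith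
  then show ?thesis using perf_diff[OF assms, of \<rho> R "WK K R"] by simp
qed

lemma contr_pert:
  assumes c0: "contr K0 c" and B: "\<And>s. (\<Sum>s'\<in>UNIV. \<bar>E s s'\<bar>) \<le> B"
    and y: "\<bar>y\<bar> * B \<le> (1 - c) / 2"
  shows "contr (\<lambda>s s'. K0 s s' + y * E s s') ((1 + c) / 2)"
proof -
  have c: "0 \<le> c" "c < 1" "\<And>s. (\<Sum>s'\<in>UNIV. \<bar>K0 s s'\<bar>) \<le> c" using c0 by (auto simp: contr_def)
  have "(\<Sum>s'\<in>UNIV. \<bar>K0 s s' + y * E s s'\<bar>) \<le> (1 + c) / 2" for s
  proof -
    have "(\<Sum>s'\<in>UNIV. \<bar>K0 s s' + y * E s s'\<bar>) \<le> (\<Sum>s'\<in>UNIV. \<bar>K0 s s'\<bar> + \<bar>y\<bar> * \<bar>E s s'\<bar>)"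
      by (intro sum_mono) (metis abs_mult abs_triangle_ineq)
    also have "\<dots> = (\<Sum>s'\<in>UNIV. \<bar>K0 s s'\<bar>) + \<bar>y\<bar> * (\<Sum>s'\<in>UNIV. \<bar>E s s'\<bar>)"
      by (simp add: sum.distrib sum_distrib_left)
    also have "\<dots> \<le> c + \<bar>y\<bar> * B" using c(3)[of s] B[of s] by (intro add_mono mult_left_mono) auto
    also have "c + \<bar>y\<bar> * B \<le> (1 + c) / 2" using y by (simp add: field_simps)
    finally show ?thesis .
  qed
  then show ?thesis using c by (auto simp: contr_def)
qed

lemma val_diff:
  fixes K0 E :: "'s::finite \<Rightarrow> 's \<Rightarrow> real"
  assumes c0: "contr K0 c" and cy: "contr (\<lambda>s s'. K0 s s' + y * E s s') c'"
  shows "valK (\<lambda>s s'. K0 s s' + y * E s s') \<rho> (\<lambda>s. R0 s + y * F s) - valK K0 \<rho> R0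
       = y * (\<Sum>s\<in>UNIV. visK (\<lambda>s s'. K0 s s' + y * E s s') \<rho> s * (F s + (\<Sum>s'\<in>UNIV. E s s' * WK K0 R0 s')))"
proof -
  let ?W = "WK K0 R0"
  let ?v = "visK (\<lambda>s s'. K0 s s' + y * E s s') \<rho>"
  have v0: "valK K0 \<rho> R0 = (\<Sum>s\<in>UNIV. \<rho> s * ?W s)" by (rule valK_W[OF c0])
  have pd: "(\<Sum>s\<in>UNIV. ?v s * (R0 s + y * F s + (\<Sum>s'\<in>UNIV. (K0 s s' + y * E s s') * ?W s') - ?W s))
         = valK (\<lambda>s s'. K0 s s' + y * E s s') \<rho> (\<lambda>s. R0 s + y * F s) - (\<Sum>s\<in>UNIV. \<rho> s * ?W s)"
    by (rule perf_diff[OF cy])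
  have eq: "R0 s + y * F s + (\<Sum>s'\<in>UNIV. (K0 s s' + y * E s s') * ?W s') - ?W s
          = y * (F s + (\<Sum>s'\<in>UNIV. E s s' * ?W s'))" for s
  proof -
    have w: "?W s = R0 s + (\<Sum>s'\<in>UNIV. K0 s s' * ?W s')" by (rule WK_fix[OF c0])
    have ex: "(\<Sum>s'\<in>UNIV. (K0 s s' + y * E s s') * ?W s') = (\<Sum>s'\<in>UNIV. K0 s s' * ?W s') + y * (\<Sum>s'\<in>UNIV. E s s' * ?W s')"
      by (simp add: distrib_right sum.distrib sum_distrib_left mult.assoc)
    show ?thesis unfolding ex distrib_left using w by linarith
  qed
  note pd2 = pd[unfolded eq]
  have sm: "(\<Sum>s\<in>UNIV. ?v s * (y * (F s + (\<Sum>s'\<in>UNIV. E s s' * ?W s'))))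
      = y * (\<Sum>s\<in>UNIV. ?v s * (F s + (\<Sum>s'\<in>UNIV. E s s' * ?W s')))"
    by (simp add: sum_distrib_left mult.left_commute)
  show ?thesis using pd2 v0 sm by linarith
qed

lemma abs_sum_prod_le:
  "\<bar>\<Sum>s\<in>UNIV. (e s :: real) * h s\<bar> \<le> (\<Sum>s\<in>UNIV. \<bar>e s\<bar>) * (\<Sum>s\<in>UNIV. \<bar>h s\<bar>)"
  for e h :: "'s::finite \<Rightarrow> real"
proof -
  have "\<bar>\<Sum>s\<in>UNIV. e s * h s\<bar> \<le> (\<Sum>s\<in>UNIV. \<bar>e s\<bar> * (\<Sum>s\<in>UNIV. \<bar>h s\<bar>))"
    by (rule order_trans[OF sum_abs]) (auto intro!: sum_mono mult_left_mono member_le_sum simp: abs_mult)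
  then show ?thesis by (simp add: sum_distrib_right)
qed

lemma val_deriv:
  fixes K0 E :: "'s::finite \<Rightarrow> 's \<Rightarrow> real"
  assumes c0: "contr K0 c"
  shows "((\<lambda>y. valK (\<lambda>s s'. K0 s s' + y * E s s') \<rho> (\<lambda>s. R0 s + y * F s)) has_real_derivative
          (\<Sum>s\<in>UNIV. visK K0 \<rho> s * (F s + (\<Sum>s'\<in>UNIV. E s s' * WK K0 R0 s')))) (at 0)"
proof -
  define h where "h s = F s + (\<Sum>s'\<in>UNIV. E s s' * WK K0 R0 s')" for s
  define f where "f = (\<lambda>y. valK (\<lambda>s s'. K0 s s' + y * E s s') \<rho> (\<lambda>s. R0 s + y * F s))"
  define D where "D = (\<Sum>s\<in>UNIV. visK K0 \<rho> s * h s)"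
  define B where "B = (\<Sum>s\<in>UNIV. \<Sum>s'\<in>UNIV. \<bar>E s s'\<bar>)"
  have B: "(\<Sum>s'\<in>UNIV. \<bar>E s s'\<bar>) \<le> B" for s
    unfolding B_def by (rule member_le_sum) (auto intro: sum_nonneg)
  have B0: "0 \<le> B" unfolding B_def by (auto intro: sum_nonneg)
  have c: "0 \<le> c" "c < 1" using c0 by (auto simp: contr_def)
  define \<delta> where "\<delta> = (1 - c) / (2 * (B + 1))"
  have \<delta>: "0 < \<delta>" using c B0 by (simp add: \<delta>_def)
  define c' where "c' = (1 + c) / 2"
  have c'1: "1 - c' = (1 - c) / 2" by (simp add: c'_def field_simps)
  have cy: "contr (\<lambda>s s'. K0 s s' + y * E s s') c'" if "\<bar>y\<bar> < \<delta>" for y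
  proof -
    have "\<bar>y\<bar> * B \<le> \<delta> * (B + 1)" using that B0
      by (intro mult_mono) auto
    also have "\<dots> = (1 - c) / 2" using B0 by (simp add: \<delta>_def field_simps)
    finally show ?thesis unfolding c'_def by (rule contr_pert[OF c0 B])
  qed
  define N where "N = (\<Sum>s\<in>UNIV. \<bar>\<rho> s\<bar>)"
  define Hm where "Hm = (\<Sum>s\<in>UNIV. \<bar>h s\<bar>)"
  define C where "C = B * N * Hm / ((1 - c) * (1 - c'))"
  have key: "\<bar>(f y - f 0) / (y - 0) - D\<bar> \<le> C * \<bar>y\<bar>" if y: "y \<noteq> 0" "\<bar>y\<bar> < \<delta>" for y
  proof -
    let ?v = "visK (\<lambda>s s'. K0 s s' + y * E s s') \<rho>"
    let ?vz = "visK K0 \<rho>"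
    have cyy: "contr (\<lambda>s s'. K0 s s' + y * E s s') c'" using cy y by simp
    have f0: "f 0 = valK K0 \<rho> R0" by (simp add: f_def)
    have fd: "f y - f 0 = y * (\<Sum>s\<in>UNIV. visK (\<lambda>s s'. K0 s s' + y * E s s') \<rho> s * h s)"
      unfolding f0 h_def using val_diff[OF c0 cyy, of \<rho> R0 F] by (simp only: f_def)
    have q: "(f y - f 0) / (y - 0) = (\<Sum>s\<in>UNIV. ?v s * h s)"
      unfolding fd using y(1) by simp
    define e where "e s = ?v s - ?vz s" for s
    have efix: "e s' = y * (\<Sum>s\<in>UNIV. ?v s * E s s') + (\<Sum>s\<in>UNIV. e s * K0 s s')" for s'
      using visK_fix[OF cyy, of \<rho> s'] visK_fix[OF c0, of \<rho> s']
      by (simp add: e_def algebra_simps sum.distrib sum_distrib_left sum_subtractf)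
    have e1: "(1 - c) * (\<Sum>s\<in>UNIV. \<bar>e s\<bar>) \<le> (\<Sum>s'\<in>UNIV. \<bar>y * (\<Sum>s\<in>UNIV. ?v s * E s s')\<bar>)"
      by (rule fix_bound[OF c0 efix])
    also have "\<dots> = \<bar>y\<bar> * (\<Sum>s'\<in>UNIV. \<bar>\<Sum>s\<in>UNIV. ?v s * E s s'\<bar>)"
      by (simp add: abs_mult flip: sum_distrib_left)
    also have "\<dots> \<le> \<bar>y\<bar> * (B * (\<Sum>s\<in>UNIV. \<bar>?v s\<bar>))"
      by (intro mult_left_mono l1_step_gen B) auto
    finally have e2: "(1 - c) * (\<Sum>s\<in>UNIV. \<bar>e s\<bar>) \<le> \<bar>y\<bar> * (B * (\<Sum>s\<in>UNIV. \<bar>?v s\<bar>))" .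
    have v1: "(1 - c') * (\<Sum>s\<in>UNIV. \<bar>?v s\<bar>) \<le> N"
      unfolding N_def by (rule fix_bound[OF cyy visK_fix[OF cyy]])
    have pos: "0 < 1 - c" "0 < 1 - c'" using c c'1 by auto
    have vb: "(\<Sum>s\<in>UNIV. \<bar>?v s\<bar>) \<le> N / (1 - c')" using v1 pos by (simp add: field_simps)
    have eb: "(\<Sum>s\<in>UNIV. \<bar>e s\<bar>) \<le> \<bar>y\<bar> * (B * (N / (1 - c'))) / (1 - c)"
    proof -
      have "\<bar>y\<bar> * (B * (\<Sum>s\<in>UNIV. \<bar>?v s\<bar>)) \<le> \<bar>y\<bar> * (B * (N / (1 - c')))"
        using vb B0 by (intro mult_left_mono) auto
      then have "(1 - c) * (\<Sum>s\<in>UNIV. \<bar>e s\<bar>) \<le> \<bar>y\<bar> * (B * (N / (1 - c')))"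
        using e2 by linarith
      then show ?thesis using pos(1) pos_le_divide_eq by (metis mult.commute)
    qed
    have "\<bar>(f y - f 0) / (y - 0) - D\<bar> = \<bar>\<Sum>s\<in>UNIV. e s * h s\<bar>"
      unfolding q D_def e_def by (simp add: sum_subtractf left_diff_distrib)
    also have "\<dots> \<le> (\<Sum>s\<in>UNIV. \<bar>e s\<bar>) * Hm" unfolding Hm_def by (rule abs_sum_prod_le)
    also have "\<dots> \<le> (\<bar>y\<bar> * (B * (N / (1 - c'))) / (1 - c)) * Hm"
      using eb by (intro mult_right_mono) (auto simp: Hm_def intro: sum_nonneg)
    also have "\<dots> = C * \<bar>y\<bar>" by (simp add: C_def field_simps)
    finally show ?thesis .
  qed
  have ev: "eventually (\<lambda>y. norm ((f y - f 0) / (y - 0) - D) \<le> C * \<bar>y\<bar>) (at 0)"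
    unfolding eventually_at using \<delta> key by (auto intro!: exI[of _ \<delta>] simp: dist_norm)
  have "((\<lambda>y. C * \<bar>y\<bar>) \<longlongrightarrow> 0) (at (0::real))"
    by (rule tendsto_eq_intros | simp)+
  then have "((\<lambda>y. (f y - f 0) / (y - 0) - D) \<longlongrightarrow> 0) (at 0)"
    by (rule Lim_null_comparison[OF ev])
  then have "((\<lambda>y. (f y - f 0) / (y - 0)) \<longlongrightarrow> D) (at 0)" by (rule LIM_zero_cancel)
  then have "(f has_real_derivative D) (at 0)" unfolding has_field_derivative_iff .
  then show ?thesis unfolding f_def D_def h_def .
qed



definition Kp :: "('n::finite \<Rightarrow> 'a set) \<Rightarrow> ('s::finite \<Rightarrow> ('n \<Rightarrow> 'a) \<Rightarrow> 's \<Rightarrow> real) \<Rightarrow> ('n,'s,'a) profile \<Rightarrow> 's \<Rightarrow> 's \<Rightarrow> real" where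
  "Kp A P pol s s' = (\<Sum>b\<in>joint_actions A. joint_prob pol s b * P s b s')"

definition Rp :: "('n::finite \<Rightarrow> 'a set) \<Rightarrow> ('n \<Rightarrow> 's \<Rightarrow> ('n \<Rightarrow> 'a) \<Rightarrow> real) \<Rightarrow> 'n \<Rightarrow> ('n,'s,'a) profile \<Rightarrow> 's \<Rightarrow> real" where
  "Rp A r i pol s = (\<Sum>b\<in>joint_actions A. joint_prob pol s b * r i s b)"

definition pert :: "('n,'s,'a) profile \<Rightarrow> 'n \<Rightarrow> ('s \<Rightarrow> 'a \<Rightarrow> real) \<Rightarrow> real \<Rightarrow> ('n,'s,'a) profile" where
  "pert pis i q y = pis(i := (\<lambda>s a. pis i s a + y * q s a))"

definition uq :: "('n::finite,'s,'a) profile \<Rightarrow> 'n \<Rightarrow> ('s \<Rightarrow> 'a \<Rightarrow> real) \<Rightarrow> 's \<Rightarrow> ('n \<Rightarrow> 'a) \<Rightarrow> real" where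
  "uq pis i q s b = q s (b i) * (\<Prod>j\<in>UNIV-{i}. pis j s (b j))"

definition Yf :: "('s::finite \<Rightarrow> ('n \<Rightarrow> 'a) \<Rightarrow> 's \<Rightarrow> real) \<Rightarrow> ('n \<Rightarrow> 's \<Rightarrow> ('n \<Rightarrow> 'a) \<Rightarrow> real) \<Rightarrow> ('n::finite,'s,'a) profile \<Rightarrow> 'n \<Rightarrow> ('s \<Rightarrow> real) \<Rightarrow> 's \<Rightarrow> ('n \<Rightarrow> 'a) \<Rightarrow> real" where
  "Yf P r pis i W s b = (\<Prod>j\<in>UNIV-{i}. pis j s (b j)) * (r i s b + (\<Sum>s'\<in>UNIV. P s b s' * W s'))"

definition Dfun where
  "Dfun A P \<rho> r pis i q = (\<Sum>s\<in>UNIV. visK (Kp A P pis) \<rho> s *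
      (\<Sum>b\<in>joint_actions A. q s (b i) * Yf P r pis i (WK (Kp A P pis) (Rp A r i pis)) s b))"

lemma occ_eq: "occ A P \<rho> pol t s = occK (Kp A P pol) \<rho> t s"
  by (induction t arbitrary: s) (simp_all add: Kp_def)

lemma value_eq: "value_fn A P \<rho> r i pol = valK (Kp A P pol) \<rho> (Rp A r i pol)"
  by (simp add: value_fn_def valK_def occ_eq Rp_def)

lemma visitation_eq: "visitation A P \<rho> pol s = visK (Kp A P pol) \<rho> s"
  by (simp add: visitation_def visK_def occ_eq)

lemma finite_J: "finite (joint_actions (A :: 'n::finite \<Rightarrow> 'a::finite set))"
  by (simp add: joint_actions_def finite_PiE)

lemma J_mem: "b \<in> joint_actions A \<Longrightarrow> b i \<in> A i"
  by (simp add: joint_actions_def PiE_iff)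

lemma jp_nonneg:
  assumes pol: "pol \<in> policy_set A" and b: "b \<in> joint_actions A"
  shows "0 \<le> joint_prob pol s b"
  unfolding joint_prob_def
proof (intro prod_nonneg)
  fix j
  have "b j \<in> A j" by (rule J_mem[OF b])
  then show "0 \<le> pol j s (b j)" using pol by (auto simp: policy_set_def policy_set_i_def)
qed

lemma jp_sum: 
  fixes A :: "'n::finite \<Rightarrow> 'a::finite set"
  shows "pol \<in> policy_set A \<Longrightarrow> (\<Sum>b\<in>joint_actions A. joint_prob pol s b) = 1"
  unfolding joint_prob_def joint_actions_def
  by (subst prod_sum_PiE[symmetric]) (auto simp: policy_set_def policy_set_i_def)

lemma jp_pert:
  "joint_prob (pert pis i q y) s b = joint_prob pis s b + y * uq pis i q s b"
proof -
  have r: "(\<Prod>j\<in>UNIV-{i}. pert pis i q y j s (b j)) = (\<Prod>j\<in>UNIV-{i}. pis j s (b j))"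
    by (intro prod.cong) (auto simp: pert_def)
  show ?thesis
    unfolding joint_prob_def prod.remove[of UNIV i, simplified] r
    by (simp add: pert_def uq_def algebra_simps)
qed

lemma Kp_pert: "Kp A P (pert pis i q y) = (\<lambda>s s'. Kp A P pis s s' + y * (\<Sum>b\<in>joint_actions A. uq pis i q s b * P s b s'))"
  by (intro ext) (simp add: Kp_def jp_pert algebra_simps sum.distrib sum_distrib_left)

lemma Rp_pert: "Rp A r i (pert pis i q y) = (\<lambda>s. Rp A r i pis s + y * (\<Sum>b\<in>joint_actions A. uq pis i q s b * r i s b))"
  by (intro ext) (simp add: Rp_def jp_pert algebra_simps sum.distrib sum_distrib_left)

lemma hq:
  "(\<Sum>b\<in>joint_actions A. uq pis i q s b * r i s b) +
   (\<Sum>s'\<in>UNIV. (\<Sum>b\<in>joint_actions A. uq pis i q s b * P s b s') * W s')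
   = (\<Sum>b\<in>joint_actions A. q s (b i) * Yf P r pis i W s b)"
proof -
  have "(\<Sum>s'\<in>UNIV. (\<Sum>b\<in>joint_actions A. uq pis i q s b * P s b s') * W s')
      = (\<Sum>b\<in>joint_actions A. uq pis i q s b * (\<Sum>s'\<in>UNIV. P s b s' * W s'))"
    by (simp add: sum_distrib_left sum_distrib_right mult.assoc sum.swap[of _ UNIV])
  then show ?thesis
    by (simp add: sum.distrib[symmetric] uq_def Yf_def algebra_simps)
qed

lemma pert0[simp]: "pert pis i q 0 = pis"
  by (simp add: pert_def)

lemma contr_policy:
  fixes A :: "'n::finite \<Rightarrow> 'a::finite set" and P :: "'s::finite \<Rightarrow> ('n \<Rightarrow> 'a) \<Rightarrow> 's \<Rightarrow> real"
  assumes A_ne: "\<And>i. A i \<noteq> {}"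
    and P_nn: "\<And>s a s'. a \<in> joint_actions A \<Longrightarrow> 0 \<le> P s a s'"
    and zeta_pos: "0 < \<zeta>"
    and stop: "\<And>s a. a \<in> joint_actions A \<Longrightarrow> \<zeta> \<le> 1 - (\<Sum>s'\<in>UNIV. P s a s')"
    and pol: "pol \<in> policy_set A"
  shows "contr (Kp A P pol) (1 - \<zeta>)"
proof -
  obtain b0 where b0: "b0 \<in> joint_actions A"
    using A_ne unfolding joint_actions_def by (metis PiE_eq_empty_iff all_not_in_conv)
  have "0 \<le> (\<Sum>s'\<in>UNIV. P s b0 s')" for s by (intro sum_nonneg P_nn[OF b0])
  then have c0: "0 \<le> 1 - \<zeta>" using stop[OF b0, of undefined] P_nn b0 by (smt (verit) sum_nonneg)
  have "(\<Sum>s'\<in>UNIV. \<bar>Kp A P pol s s'\<bar>) \<le> 1 - \<zeta>" for s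
  proof -
    have "(\<Sum>s'\<in>UNIV. \<bar>Kp A P pol s s'\<bar>) = (\<Sum>s'\<in>UNIV. Kp A P pol s s')"
      unfolding Kp_def using jp_nonneg[OF pol] P_nn
      by (intro sum.cong refl abs_of_nonneg sum_nonneg mult_nonneg_nonneg) auto
    also have "\<dots> = (\<Sum>b\<in>joint_actions A. joint_prob pol s b * (\<Sum>s'\<in>UNIV. P s b s'))"
      unfolding Kp_def by (simp add: sum_distrib_left sum.swap[of _ UNIV])
    also have "\<dots> \<le> (\<Sum>b\<in>joint_actions A. joint_prob pol s b * (1 - \<zeta>))"
      using jp_nonneg[OF pol] stop by (intro sum_mono mult_left_mono) (auto simp: algebra_simps)
    also have "\<dots> = 1 - \<zeta>" using jp_sum[OF pol] by (simp add: sum_distrib_right[symmetric])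
    finally show ?thesis .
  qed
  then show ?thesis using c0 zeta_pos by (auto simp: contr_def)
qed

lemma occK_nonneg: "(\<And>s s'. 0 \<le> K s s') \<Longrightarrow> (\<And>s. 0 \<le> \<rho> s) \<Longrightarrow> 0 \<le> occK K \<rho> t s"
  by (induction t arbitrary: s) (auto intro!: sum_nonneg)

lemma visK_nonneg:
  assumes "contr K c" "\<And>s s'. 0 \<le> K s s'" "\<And>s. 0 \<le> \<rho> s"
  shows "0 \<le> visK K \<rho> s"
  unfolding visK_def by (intro suminf_nonneg summable_occK[OF assms(1)] occK_nonneg assms(2,3))

lemma Kp_nonneg:
  assumes "\<And>s a s'. a \<in> joint_actions A \<Longrightarrow> 0 \<le> P s a s'" "pol \<in> policy_set A"
  shows "0 \<le> Kp A P pol s s'"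
  unfolding Kp_def using assms jp_nonneg by (auto intro!: sum_nonneg mult_nonneg_nonneg)

lemma pert_deriv:
  assumes c0: "contr (Kp A P pis) c"
  shows "((\<lambda>y. value_fn A P \<rho> r i (pert pis i q y)) has_real_derivative Dfun A P \<rho> r pis i q) (at 0)"
proof -
  have "((\<lambda>y. valK (\<lambda>s s'. Kp A P pis s s' + y * (\<Sum>b\<in>joint_actions A. uq pis i q s b * P s b s')) \<rho>
        (\<lambda>s. Rp A r i pis s + y * (\<Sum>b\<in>joint_actions A. uq pis i q s b * r i s b))) has_real_derivative
        (\<Sum>s\<in>UNIV. visK (Kp A P pis) \<rho> s * ((\<Sum>b\<in>joint_actions A. uq pis i q s b * r i s b) +
          (\<Sum>s'\<in>UNIV. (\<Sum>b\<in>joint_actions A. uq pis i q s b * P s b s') * WK (Kp A P pis) (Rp A r i pis) s')))) (at 0)"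
    by (rule val_deriv[OF c0])
  then show ?thesis
    unfolding value_eq Kp_pert Rp_pert hq Dfun_def .
qed

lemma pert_diff:
  assumes c0: "contr (Kp A P pis) c" and c1: "contr (Kp A P (pert pis i q y)) c'"
  shows "value_fn A P \<rho> r i (pert pis i q y) - value_fn A P \<rho> r i pis
    = y * (\<Sum>s\<in>UNIV. visK (Kp A P (pert pis i q y)) \<rho> s *
      (\<Sum>b\<in>joint_actions A. q s (b i) * Yf P r pis i (WK (Kp A P pis) (Rp A r i pis)) s b))"
proof -
  have c1': "contr (\<lambda>s s'. Kp A P pis s s' + y * (\<Sum>b\<in>joint_actions A. uq pis i q s b * P s b s')) c'"
    using c1 by (simp add: Kp_pert)
  show ?thesis
    using val_diff[OF c0 c1', of \<rho> "Rp A r i pis" "\<lambda>s. \<Sum>b\<in>joint_actions A. uq pis i q s b * r i s b"]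
    unfolding value_eq Kp_pert Rp_pert hq by simp
qed



lemma Dfun_delta:
  "Dfun A P \<rho> r pis i (\<lambda>s' a'. if s' = s \<and> a' = a then 1 else 0)
   = visK (Kp A P pis) \<rho> s * (\<Sum>b\<in>joint_actions A. if b i = a then Yf P r pis i (WK (Kp A P pis) (Rp A r i pis)) s b else 0)"
proof -
  let ?Y = "Yf P r pis i (WK (Kp A P pis) (Rp A r i pis))"
  have "visK (Kp A P pis) \<rho> s' * (\<Sum>b\<in>joint_actions A. (if s' = s \<and> b i = a then 1 else 0) * ?Y s' b)
      = (if s' = s then visK (Kp A P pis) \<rho> s * (\<Sum>b\<in>joint_actions A. if b i = a then ?Y s b else 0) else 0)" for s'
    by (cases "s' = s") (auto intro!: sum.cong)
  then show ?thesis unfolding Dfun_def by simp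
qed

lemma grad_i_eq:
  assumes c0: "contr (Kp A P pis) c"
  shows "grad_i A P \<rho> r pis i s0 a0 = Dfun A P \<rho> r pis i (\<lambda>s a. if s = s0 \<and> a = a0 then 1 else 0)"
proof -
  define q where "q = (\<lambda>s a. if s = s0 \<and> a = a0 then 1 else (0::real))"
  define x0 where "x0 = pis i s0 a0"
  define g where "g = (\<lambda>y. value_fn A P \<rho> r i (pert pis i q y))"
  have eq: "pis(i := (pis i)(s0 := (pis i s0)(a0 := x))) = pert pis i q (x + - x0)" for x
    by (auto simp: pert_def fun_eq_iff q_def x0_def)
  have d: "(g has_real_derivative Dfun A P \<rho> r pis i q) (at 0)"
    unfolding g_def by (rule pert_deriv[OF c0])
  then have "((\<lambda>x. g (x + - x0)) has_real_derivative Dfun A P \<rho> r pis i q) (at x0)"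
    using DERIV_shift[of g "Dfun A P \<rho> r pis i q" x0 "- x0"] by simp
  then have "deriv (\<lambda>x. g (x + - x0)) x0 = Dfun A P \<rho> r pis i q" by (rule DERIV_imp_deriv)
  then show ?thesis unfolding grad_i_def eq g_def x0_def q_def .
qed

lemma inner_swap:
  fixes A :: "'n::finite \<Rightarrow> 'a::finite set" and Y :: "('n \<Rightarrow> 'a) \<Rightarrow> real"
  shows "(\<Sum>a\<in>A i. (\<Sum>b\<in>joint_actions A. if b i = a then Y b else 0) * d a)
       = (\<Sum>b\<in>joint_actions A. d (b i) * Y b)"
proof -
  have "(\<Sum>a\<in>A i. (\<Sum>b\<in>joint_actions A. if b i = a then Y b else 0) * d a)
      = (\<Sum>a\<in>A i. \<Sum>b\<in>joint_actions A. if b i = a then Y b * d a else 0)"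
    by (intro sum.cong refl, subst sum_distrib_right) (rule sum.cong, auto)
  also have "\<dots> = (\<Sum>b\<in>joint_actions A. \<Sum>a\<in>A i. if b i = a then Y b * d a else 0)"
    by (rule sum.swap)
  also have "\<dots> = (\<Sum>b\<in>joint_actions A. d (b i) * Y b)"
    using finite_J[of A] by (intro sum.cong refl) (simp add: J_mem mult.commute)
  finally show ?thesis .
qed

lemma sum_pull3: "(\<Sum>a\<in>S. (v::real) * X a * d a) = v * (\<Sum>a\<in>S. X a * d a)"
  by (simp add: sum_distrib_left mult.assoc)

lemma grad_inner_eq:
  fixes A :: "'n::finite \<Rightarrow> 'a::finite set"
  assumes c0: "contr (Kp A P pis) c"
  shows "grad_inner A P \<rho> r pis pol = (\<Sum>i\<in>UNIV. Dfun A P \<rho> r pis i (\<lambda>s a. pol i s a - pis i s a))"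
  unfolding grad_inner_def
proof (intro sum.cong refl)
  fix i
  let ?Y = "Yf P r pis i (WK (Kp A P pis) (Rp A r i pis))"
  show "(\<Sum>s\<in>UNIV. \<Sum>a\<in>A i. grad_i A P \<rho> r pis i s a * (pol i s a - pis i s a))
      = Dfun A P \<rho> r pis i (\<lambda>s a. pol i s a - pis i s a)"
    unfolding grad_i_eq[OF c0] Dfun_delta Dfun_def
  proof (intro sum.cong refl)
    fix s
    show "(\<Sum>a\<in>A i. visK (Kp A P pis) \<rho> s * (\<Sum>b\<in>joint_actions A. if b i = a then ?Y s b else 0) * (pol i s a - pis i s a))
      = visK (Kp A P pis) \<rho> s * (\<Sum>b\<in>joint_actions A. (pol i s (b i) - pis i s (b i)) * ?Y s b)"
      by (simp only: sum_pull3 inner_swap[where A=A and i=i and Y="\<lambda>b. ?Y s b" and d="\<lambda>a. pol i s a - pis i s a"])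
  qed
qed



theorem lemma3:
  fixes A :: "'n::finite \<Rightarrow> 'a::finite set"
    and P :: "'s::finite \<Rightarrow> ('n \<Rightarrow> 'a) \<Rightarrow> 's \<Rightarrow> real"
    and \<rho> :: "'s \<Rightarrow> real"
    and r :: "'n \<Rightarrow> 's \<Rightarrow> ('n \<Rightarrow> 'a) \<Rightarrow> real"
    and \<zeta> :: real
    and pis :: "('n,'s,'a) profile"
  assumes A_ne: "\<And>i. A i \<noteq> {}"
    and r_bd: "\<And>i s a. a \<in> joint_actions A \<Longrightarrow> \<bar>r i s a\<bar> \<le> 1"
    and P_nn: "\<And>s a s'. a \<in> joint_actions A \<Longrightarrow> 0 \<le> P s a s'"
    and zeta_pos: "0 < \<zeta>"
    and stop: "\<And>s a. a \<in> joint_actions A \<Longrightarrow> \<zeta> \<le> 1 - (\<Sum>s'\<in>UNIV. P s a s')"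
    and rho_nn: "\<And>s. 0 \<le> \<rho> s"
    and rho_sum: "(\<Sum>s\<in>UNIV. \<rho> s) = 1"
    and mismatch: "\<exists>M. \<forall>pol\<in>policy_set A. \<forall>pol'\<in>policy_set A. \<forall>s.
                     visitation A P \<rho> pol s \<le> M * visitation A P \<rho> pol' s"
    and pis_pol: "pis \<in> policy_set A"
  shows "is_nash A P \<rho> r pis \<longleftrightarrow> (\<forall>pol\<in>policy_set A. grad_inner A P \<rho> r pis pol \<le> 0)"
proof -
  have cpol: "contr (Kp A P pol) (1 - \<zeta>)" if "pol \<in> policy_set A" for pol
    by (rule contr_policy[OF A_ne P_nn zeta_pos stop that])
  have c0: "contr (Kp A P pis) (1 - \<zeta>)" by (rule cpol[OF pis_pol])
  note GI = grad_inner_eq[OF c0]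
  show ?thesis
  proof
    assume nash: "is_nash A P \<rho> r pis"
    show "\<forall>pol\<in>policy_set A. grad_inner A P \<rho> r pis pol \<le> 0"
    proof
      fix pol :: "('n,'s,'a) profile" assume pol: "pol \<in> policy_set A"
      have "Dfun A P \<rho> r pis i (\<lambda>s a. pol i s a - pis i s a) \<le> 0" for i
      proof (rule ccontr)
        define q where "q = (\<lambda>s a. pol i s a - pis i s a)"
        define f where "f = (\<lambda>y. value_fn A P \<rho> r i (pert pis i q y))"
        assume "\<not> Dfun A P \<rho> r pis i (\<lambda>s a. pol i s a - pis i s a) \<le> 0"
        then have pos: "0 < Dfun A P \<rho> r pis i q" by (simp add: q_def)
        have der: "DERIV f 0 :> Dfun A P \<rho> r pis i q" unfolding f_def by (rule pert_deriv[OF c0])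
        from DERIV_pos_inc_right[OF der pos] obtain d where
          d: "d > 0" "\<And>h. 0 < h \<Longrightarrow> h < d \<Longrightarrow> f 0 < f (0 + h)" by blast
        define h where "h = min (d/2) 1"
        have h: "0 < h" "h < d" "h \<le> 1" using d(1) by (auto simp: h_def)
        have "f 0 < f h" using d(2)[OF h(1,2)] by simp
        moreover have "f h \<le> f 0"
        proof -
          have pin: "(\<lambda>s a. pis i s a + h * q s a) \<in> policy_set_i A i"
          proof -
            have pi: "pis i \<in> policy_set_i A i" and po: "pol i \<in> policy_set_i A i"
              using pis_pol pol by (auto simp: policy_set_def)
            have e: "pis i s a + h * q s a = (1 - h) * pis i s a + h * pol i s a" for s a
              by (simp add: q_def algebra_simps)
            show ?thesis unfolding policy_set_i_def mem_Collect_eq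
            proof (intro allI conjI ballI impI)
              fix s a assume "a \<notin> A i"
              then show "pis i s a + h * q s a = 0" using pi po by (simp add: policy_set_i_def q_def)
            next
              fix s a assume "a \<in> A i"
              then show "0 \<le> pis i s a + h * q s a" unfolding e using pi po h
                by (auto simp: policy_set_i_def intro!: add_nonneg_nonneg mult_nonneg_nonneg)
            next
              fix s
              have "(\<Sum>a\<in>A i. pis i s a + h * q s a) = (1 - h) * (\<Sum>a\<in>A i. pis i s a) + h * (\<Sum>a\<in>A i. pol i s a)"
                unfolding e by (simp add: sum.distrib sum_distrib_left)
              then show "(\<Sum>a\<in>A i. pis i s a + h * q s a) = 1" using pi po by (simp add: policy_set_i_def)
            qed
          qed
          have "value_fn A P \<rho> r i (pis(i := (\<lambda>s a. pis i s a + h * q s a))) \<le> value_fn A P \<rho> r i pis"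
            using nash pin by (simp add: is_nash_def)
          then show ?thesis by (simp add: f_def pert_def)
        qed
        ultimately show False by simp
      qed
      then show "grad_inner A P \<rho> r pis pol \<le> 0" unfolding GI by (intro sum_nonpos) auto
    qed
  next
    assume G: "\<forall>pol\<in>policy_set A. grad_inner A P \<rho> r pis pol \<le> 0"
    show "is_nash A P \<rho> r pis" unfolding is_nash_def
    proof (intro conjI pis_pol ballI allI)
      fix i and p :: "'s \<Rightarrow> 'a \<Rightarrow> real" assume p: "p \<in> policy_set_i A i"
      define q where "q = (\<lambda>s a. p s a - pis i s a)"
      define W where "W = WK (Kp A P pis) (Rp A r i pis)"
      define g where "g s = (\<Sum>b\<in>joint_actions A. q s (b i) * Yf P r pis i W s b)" for s
      have gle: "visK (Kp A P pis) \<rho> s0 * g s0 \<le> 0" for s0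
      proof -
        define pol where "pol = pis(i := (pis i)(s0 := p s0))"
        have pol_in: "pol \<in> policy_set A"
          using pis_pol p by (auto simp: pol_def policy_set_def policy_set_i_def)
        have z: "Dfun A P \<rho> r pis j (\<lambda>s a. pol j s a - pis j s a) = 0" if "j \<noteq> i" for j
          using that by (simp add: pol_def Dfun_def)
        have "grad_inner A P \<rho> r pis pol = (\<Sum>j\<in>UNIV. Dfun A P \<rho> r pis j (\<lambda>s a. pol j s a - pis j s a))"
          by (rule GI)
        also have "\<dots> = Dfun A P \<rho> r pis i (\<lambda>s a. pol i s a - pis i s a)"
          using z by (subst sum.remove[of UNIV i]) (auto intro!: sum.neutral)
        also have "\<dots> = visK (Kp A P pis) \<rho> s0 * g s0"
        proof -
          have "visK (Kp A P pis) \<rho> s * (\<Sum>b\<in>joint_actions A. (pol i s (b i) - pis i s (b i)) * Yf P r pis i W s b)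
              = (if s = s0 then visK (Kp A P pis) \<rho> s0 * g s0 else 0)" for s
            by (cases "s = s0") (auto simp: pol_def g_def q_def)
          then show ?thesis unfolding Dfun_def W_def[symmetric] by simp
        qed
        finally show ?thesis using G pol_in by auto
      qed
      have pi'_eq: "pert pis i q 1 = pis(i := p)" by (auto simp: pert_def q_def fun_eq_iff)
      have pi'_in: "pis(i := p) \<in> policy_set A" using pis_pol p by (auto simp: policy_set_def)
      have c1: "contr (Kp A P (pert pis i q 1)) (1 - \<zeta>)" unfolding pi'_eq by (rule cpol[OF pi'_in])
      have diff: "value_fn A P \<rho> r i (pis(i := p)) - value_fn A P \<rho> r i pis
          = 1 * (\<Sum>s\<in>UNIV. visK (Kp A P (pis(i := p))) \<rho> s * g s)"
        using pert_diff[OF c0 c1, of \<rho> r] unfolding g_def W_def pi'_eq .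
      obtain M where M: "\<forall>pol\<in>policy_set A. \<forall>pol'\<in>policy_set A. \<forall>s.
                     visitation A P \<rho> pol s \<le> M * visitation A P \<rho> pol' s" using mismatch by blast
      have "visK (Kp A P (pis(i := p))) \<rho> s * g s \<le> 0" for s
      proof -
        have v'0: "0 \<le> visK (Kp A P (pis(i := p))) \<rho> s"
          by (rule visK_nonneg[OF cpol[OF pi'_in]]) (auto intro: Kp_nonneg[OF P_nn pi'_in] rho_nn)
        have v0: "0 \<le> visK (Kp A P pis) \<rho> s"
          by (rule visK_nonneg[OF c0]) (auto intro: Kp_nonneg[OF P_nn pis_pol] rho_nn)
        show ?thesis
        proof (cases "visK (Kp A P pis) \<rho> s = 0")
          case True
          have "visK (Kp A P (pis(i := p))) \<rho> s \<le> M * visK (Kp A P pis) \<rho> s"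
            using M pi'_in pis_pol by (simp add: visitation_eq)
          with True v'0 have "visK (Kp A P (pis(i := p))) \<rho> s = 0" by simp
          then show ?thesis by simp
        next
          case False
          with v0 have "0 < visK (Kp A P pis) \<rho> s" by simp
          with gle[of s] have "g s \<le> 0" by (simp add: mult_le_0_iff)
          with v'0 show ?thesis by (simp add: mult_nonneg_nonpos)
        qed
      qed
      then have "(\<Sum>s\<in>UNIV. visK (Kp A P (pis(i := p))) \<rho> s * g s) \<le> 0" by (intro sum_nonpos) auto
      with diff show "value_fn A P \<rho> r i (pis(i := p)) \<le> value_fn A P \<rho> r i pis" by simp
    qed
  qed
qed


end
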